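(* Let $G$ be a directed graph, let $a, b, k \geq 1$ be integers, and let $D$ be a well-linked set in $G$ of size $4(a+k)b$. If $G$ does not contain a family of $k$ directed cycles such that every vertex of $G$ is in at most two of the cycles, then there exist walks $P_1,\ldots,P_a$ in $G$ and sets $A_i, B_i \subseteq V(P_i)$ for $1 \leq i \leq a$ such that: (1) the family $\{P_1,\ldots,P_a\}$ is of congestion $2$; (2) the sets $A_1,B_1,\ldots,A_a,B_a$ each have size $b$ and are pairwise disjoint; (3) for every $1 \leq i \leq a$, all vertices of $A_i$ appear on $P_i$ before all vertices of $B_i$; (4) $\bigcup_{i=1}^a (A_i \cup B_i)$ is well-linked in $G$.
   Context: For $A,B\subseteq V(G)$ with $|A|=|B|$, a linkage from $A$ to $B$ is a set of $|A|$ pairwise vertex-disjoint directed paths each starting in $A$ and ending in $B$. A set $W\subseteq V(G)$ is well-linked if for all $A,B\subseteq W$ with $|A|=|B|$ there is a linkage from $A$ to $B$ in $G-(W\setminus(A\cup B))$. A family of walks is of congestion $c$ if every vertex is visited at most $c$ times in total by the walks (each visit counted separately). *)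

theory Defs
  imports Main
begin

definition digraph :: "'v set \<Rightarrow> ('v \<times> 'v) set \<Rightarrow> bool" where
  "digraph V E \<longleftrightarrow> finite V \<and> E \<subseteq> V \<times> V"

definition is_walk :: "'v set \<Rightarrow> ('v \<times> 'v) set \<Rightarrow> 'v list \<Rightarrow> bool" where
  "is_walk V E P \<longleftrightarrow> P \<noteq> [] \<and> set P \<subseteq> V \<and>
     (\<forall>i. Suc i < length P \<longrightarrow> (P ! i, P ! Suc i) \<in> E)"

definition is_path :: "'v set \<Rightarrow> ('v \<times> 'v) set \<Rightarrow> 'v list \<Rightarrow> bool" where
  "is_path V E P \<longleftrightarrow> is_walk V E P \<and> distinct P"

definition linkage_in :: "'v set \<Rightarrow> ('v \<times> 'v) set \<Rightarrow> 'v set \<Rightarrow> 'v set \<Rightarrow> 'v set \<Rightarrow> bool" where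
  "linkage_in V E X A B \<longleftrightarrow>
     (\<exists>Ps :: 'v list set. finite Ps \<and> card Ps = card A \<and>
        (\<forall>P\<in>Ps. is_path (V - X) E P \<and> hd P \<in> A \<and> last P \<in> B) \<and>
        (\<forall>P\<in>Ps. \<forall>Q\<in>Ps. P \<noteq> Q \<longrightarrow> set P \<inter> set Q = {}))"

definition well_linked :: "'v set \<Rightarrow> ('v \<times> 'v) set \<Rightarrow> 'v set \<Rightarrow> bool" where
  "well_linked V E W \<longleftrightarrow> W \<subseteq> V \<and>
     (\<forall>A B. A \<subseteq> W \<longrightarrow> B \<subseteq> W \<longrightarrow> card A = card B \<longrightarrow>
        linkage_in V E (W - (A \<union> B)) A B)"

(* A directed cycle, represented as its set of arcs: a cyclic sequence of
   pairwise distinct vertices v_0,...,v_{m-1} (m \<ge> 1) with arcs v_i -> v_{i+1 mod m}. *)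
definition is_cycle :: "('v \<times> 'v) set \<Rightarrow> ('v \<times> 'v) set \<Rightarrow> bool" where
  "is_cycle E C \<longleftrightarrow> (\<exists>cs. cs \<noteq> [] \<and> distinct cs \<and> C = set (zip cs (rotate1 cs)) \<and> C \<subseteq> E)"

definition cycle_verts :: "('v \<times> 'v) set \<Rightarrow> 'v set" where
  "cycle_verts C = fst ` C"

definition has_half_integral_cycle_packing :: "'v set \<Rightarrow> ('v \<times> 'v) set \<Rightarrow> nat \<Rightarrow> bool" where
  "has_half_integral_cycle_packing V E k \<longleftrightarrow>
     (\<exists>\<C>. finite \<C> \<and> card \<C> = k \<and> (\<forall>C\<in>\<C>. is_cycle E C) \<and>
        (\<forall>v\<in>V. card {C\<in>\<C>. v \<in> cycle_verts C} \<le> 2))"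

definition congestion_le :: "nat \<Rightarrow> (nat \<Rightarrow> 'v list) \<Rightarrow> nat \<Rightarrow> bool" where
  "congestion_le a P c \<longleftrightarrow> (\<forall>v. (\<Sum>i<a. count_list (P i) v) \<le> c)"

end

theory Submission
  imports Defs
begin


lemma is_walk_Cons:
  "is_walk V E (x # zs) \<longleftrightarrow> x \<in> V \<and> (zs = [] \<or> ((x, hd zs) \<in> E \<and> is_walk V E zs))"
proof (cases zs)
  case Nil then show ?thesis by (simp add: is_walk_def)
next
  case (Cons y ys)
  have "(\<forall>i. Suc i < length (x # y # ys) \<longrightarrow> ((x # y # ys) ! i, (x # y # ys) ! Suc i) \<in> E)
     \<longleftrightarrow> (x, y) \<in> E \<and> (\<forall>i. Suc i < length (y # ys) \<longrightarrow> ((y # ys) ! i, (y # ys) ! Suc i) \<in> E)"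
    (is "?L \<longleftrightarrow> ?R")
  proof
    assume L: ?L
    show ?R
    proof (intro conjI allI impI)
      show "(x, y) \<in> E" using L[rule_format, of 0] by simp
      fix i assume "Suc i < length (y # ys)"
      then show "((y # ys) ! i, (y # ys) ! Suc i) \<in> E" using L[rule_format, of "Suc i"] by simp
    qed
  next
    assume R: ?R
    show ?L
    proof (intro allI impI)
      fix i assume i: "Suc i < length (x # y # ys)"
      show "((x # y # ys) ! i, (x # y # ys) ! Suc i) \<in> E"
      proof (cases i)
        case 0 then show ?thesis using R by simp
      next
        case (Suc j) then show ?thesis using R i by simp
      qed
    qed
  qed
  then show ?thesis using Cons by (auto simp: is_walk_def)
qed

lemma is_walk_append_iff:
  assumes "xs \<noteq> []" "ys \<noteq> []"
  shows "is_walk V E (xs @ ys) \<longleftrightarrow> is_walk V E xs \<and> is_walk V E ys \<and> (last xs, hd ys) \<in> E"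
  using assms(1)
proof (induction xs)
  case Nil then show ?case by simp
next
  case (Cons x xs)
  show ?case
  proof (cases "xs = []")
    case True then show ?thesis using assms(2) by (auto simp add: is_walk_Cons)
  next
    case False
    then show ?thesis using Cons.IH by (auto simp: is_walk_Cons)
  qed
qed

definition join :: "'v list list \<Rightarrow> 'v list" where
  "join ps = concat (map butlast ps) @ [last (last ps)]"

lemma join_Cons: "ps \<noteq> [] \<Longrightarrow> join (p # ps) = butlast p @ join ps"
  by (simp add: join_def)

lemma join_single: "p \<noteq> [] \<Longrightarrow> join [p] = p"
  by (simp add: join_def)

lemma walk_butlast:
  assumes "is_walk V E p" "length p \<ge> 2"
  shows "is_walk V E (butlast p) \<and> (last (butlast p), last p) \<in> E \<and> butlast p \<noteq> []"
proof -
  have ne: "butlast p \<noteq> []" using assms(2) by (cases p) auto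
  have "p = butlast p @ [last p]" using assms(2) by (cases p) auto
  then have "is_walk V E (butlast p @ [last p])" using assms(1) by simp
  then show ?thesis using is_walk_append_iff[OF ne, of "[last p]"] ne by simp
qed

lemma join_walk:
  assumes "ps \<noteq> []" "\<forall>p\<in>set ps. is_walk V E p \<and> length p \<ge> 2"
    "\<forall>j. Suc j < length ps \<longrightarrow> last (ps ! j) = hd (ps ! Suc j)"
  shows "is_walk V E (join ps) \<and> hd (join ps) = hd (hd ps)"
  using assms
proof (induction ps)
  case Nil then show ?case by simp
next
  case (Cons p ps)
  have pw: "is_walk V E p" "length p \<ge> 2" using Cons.prems by auto
  show ?case
  proof (cases "ps = []")
    case True
    have "p \<noteq> []" using pw(2) by auto
    then show ?thesis using pw True by (simp add: join_single)
  next
    case False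
    have ch: "\<forall>j. Suc j < length ps \<longrightarrow> last (ps ! j) = hd (ps ! Suc j)"
      using Cons.prems(3) by (metis Suc_less_eq length_Cons nth_Cons_Suc)
    have IH: "is_walk V E (join ps) \<and> hd (join ps) = hd (hd ps)"
      using Cons.IH[OF False] Cons.prems(2) ch by auto
    have l: "last p = hd (hd ps)" using Cons.prems(3)[rule_format, of 0] False
      by (simp add: hd_conv_nth)
    have jne: "join ps \<noteq> []" by (simp add: join_def)
    have bw: "is_walk V E (butlast p)" "(last (butlast p), last p) \<in> E" "butlast p \<noteq> []"
      using walk_butlast[OF pw] by auto
    have "is_walk V E (butlast p @ join ps)"
      using is_walk_append_iff[OF bw(3) jne] bw IH l by simp
    moreover have "hd (butlast p @ join ps) = hd p"
      using bw(3) pw(2) by (cases p) auto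
    ultimately show ?thesis using False by (simp add: join_Cons)
  qed
qed

lemma join_count:
  assumes "ps \<noteq> []" "\<forall>p\<in>set ps. p \<noteq> []"
  shows "count_list (join ps) v \<le> sum_list (map (\<lambda>p. count_list p v) ps)"
  using assms
proof (induction ps)
  case Nil then show ?case by simp
next
  case (Cons p ps)
  have pne: "p \<noteq> []" using Cons.prems by auto
  have cb: "count_list (butlast p) v \<le> count_list p v"
  proof -
    have "p = butlast p @ [last p]" using pne by simp
    then have "count_list p v = count_list (butlast p) v + count_list [last p] v"
      by (metis count_list_append)
    then show ?thesis by simp
  qed
  show ?case
  proof (cases "ps = []")
    case True then show ?thesis using pne by (simp add: join_single)
  next
    case False
    then show ?thesis using Cons.IH Cons.prems cb by (simp add: join_Cons)
  qed
qed



lemma succ_cycle: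
  assumes "finite U" "U \<noteq> {}" "\<forall>u\<in>U. \<exists>w\<in>U. (u,w) \<in> E"
  shows "\<exists>C. is_cycle E C \<and> cycle_verts C \<subseteq> U"
proof -
  obtain s where s: "\<forall>u\<in>U. s u \<in> U \<and> (u, s u) \<in> E" using assms(3) by metis
  have iter: "(s^^n) u \<in> U" if "u \<in> U" for n u
    using that by (induction n) (auto simp: s)
  obtain u0 where u0: "u0 \<in> U" using assms(2) by auto
  have "\<not> inj_on (\<lambda>n. (s^^n) u0) {..card U}"
  proof
    assume inj: "inj_on (\<lambda>n. (s^^n) u0) {..card U}"
    have "(\<lambda>n. (s^^n) u0) ` {..card U} \<subseteq> U" using iter u0 by auto
    then have "card ((\<lambda>n. (s^^n) u0) ` {..card U}) \<le> card U" using assms(1) card_mono by blast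
    then show False using card_image[OF inj] by simp
  qed
  then obtain i j where ij: "i < j" "(s^^i) u0 = (s^^j) u0"
    unfolding inj_on_def by (metis linorder_neqE_nat)
  define y where "y = (s^^i) u0"
  have yU: "y \<in> U" using iter u0 y_def by auto
  have yper: "(s^^(j-i)) y = y"
    using ij unfolding y_def by (metis funpow_add comp_apply le_add_diff_inverse2 less_imp_le)
  define p where "p = (LEAST p. 0 < p \<and> (s^^p) y = y)"
  have pP: "0 < p \<and> (s^^p) y = y"
    unfolding p_def by (rule LeastI[of _ "j-i"]) (use ij yper in auto)
  have pmin: "(s^^q) y \<noteq> y" if "0 < q" "q < p" for q
    using not_less_Least[of q "\<lambda>p. 0 < p \<and> (s^^p) y = y"] that unfolding p_def by auto
  define cs where "cs = map (\<lambda>n. (s^^n) y) [0..<p]"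
  have inj: "inj_on (\<lambda>n. (s^^n) y) {0..<p}"
  proof (rule inj_onI, rule ccontr)
    fix n1 n2 assume n: "n1 \<in> {0..<p}" "n2 \<in> {0..<p}" "(s^^n1) y = (s^^n2) y" "n1 \<noteq> n2"
    have key: "(s^^(p - m2 + m1)) y = y" if "m1 < m2" "m2 < p" "(s^^m1) y = (s^^m2) y" for m1 m2
    proof -
      have "(s^^(p - m2 + m1)) y = (s^^(p-m2)) ((s^^m1) y)" by (simp add: funpow_add)
      also have "\<dots> = (s^^(p-m2)) ((s^^m2) y)" using that by simp
      also have "\<dots> = (s^^p) y" using that by (metis funpow_add comp_apply le_add_diff_inverse2 less_imp_le)
      finally show ?thesis using pP by simp
    qed
    show False
    proof (cases "n1 < n2")
      case True
      have "0 < p - n2 + n1" "p - n2 + n1 < p" using True n by auto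
      then show ?thesis using key[of n1 n2] pmin[of "p - n2 + n1"] n True by auto
    next
      case False
      then have "n2 < n1" using n by auto
      have "0 < p - n1 + n2" "p - n1 + n2 < p" using \<open>n2 < n1\<close> n by auto
      then show ?thesis using key[of n2 n1] pmin[of "p - n1 + n2"] n \<open>n2 < n1\<close> by auto
    qed
  qed
  have lcs: "length cs = p" by (simp add: cs_def)
  have dist: "distinct cs" unfolding cs_def using inj by (simp add: distinct_map)
  have ne: "cs \<noteq> []" using pP by (simp add: cs_def)
  have arcs: "set (zip cs (rotate1 cs)) \<subseteq> E"
  proof
    fix e assume "e \<in> set (zip cs (rotate1 cs))"
    then obtain n where n: "n < p" "e = (cs ! n, rotate1 cs ! n)"
      by (auto simp: set_zip lcs)
    have c1: "cs ! n = (s^^n) y" using n by (simp add: cs_def)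
    have c2: "rotate1 cs ! n = s ((s^^n) y)"
    proof (cases "Suc n < p")
      case True
      then show ?thesis using n by (simp add: nth_rotate1 lcs cs_def)
    next
      case False
      then have "Suc n = p" using n by auto
      then have "rotate1 cs ! n = cs ! 0" by (simp add: nth_rotate1 lcs)
      also have "\<dots> = y" using pP by (simp add: cs_def)
      also have "\<dots> = (s^^(Suc n)) y" using pP \<open>Suc n = p\<close> by simp
      finally show ?thesis by simp
    qed
    show "e \<in> E" using n c1 c2 s iter[OF yU, of n] by auto
  qed
  have verts: "cycle_verts (set (zip cs (rotate1 cs))) = set cs"
  proof -
    have "map fst (zip cs (rotate1 cs)) = cs" by simp
    then show ?thesis unfolding cycle_verts_def by (metis set_map)
  qed
  have "set cs \<subseteq> U" using iter[OF yU] by (auto simp: cs_def)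
  then show ?thesis using dist ne arcs verts unfolding is_cycle_def by blast
qed



lemma funpow_closed: "h ` S \<subseteq> S \<Longrightarrow> z \<in> S \<Longrightarrow> (h^^t) z \<in> S"
  by (induction t) auto

lemma funpow_period:
  assumes "(f^^q) y = y" "0 < q"
  obtains p where "0 < p" "(f^^p) y = y" "inj_on (\<lambda>n. (f^^n) y) {..<p}"
proof -
  define p where "p = (LEAST p. 0 < p \<and> (f^^p) y = y)"
  have pP: "0 < p \<and> (f^^p) y = y"
    unfolding p_def by (rule LeastI[of _ q]) (use assms in auto)
  have pmin: "(f^^r) y \<noteq> y" if "0 < r" "r < p" for r
    using not_less_Least[of r "\<lambda>p. 0 < p \<and> (f^^p) y = y"] that unfolding p_def by auto
  have key: "(f^^(p - m2 + m1)) y = y" if "m1 < m2" "m2 < p" "(f^^m1) y = (f^^m2) y" for m1 m2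
  proof -
    have "(f^^(p - m2 + m1)) y = (f^^(p-m2)) ((f^^m1) y)" by (simp add: funpow_add)
    also have "\<dots> = (f^^(p-m2)) ((f^^m2) y)" using that by simp
    also have "\<dots> = (f^^p) y" using that by (metis funpow_add comp_apply le_add_diff_inverse2 less_imp_le)
    finally show ?thesis using pP by simp
  qed
  have inj: "inj_on (\<lambda>n. (f^^n) y) {..<p}"
  proof (rule inj_onI, rule ccontr)
    fix n1 n2 assume n: "n1 \<in> {..<p}" "n2 \<in> {..<p}" "(f^^n1) y = (f^^n2) y" "n1 \<noteq> n2"
    show False
    proof (cases "n1 < n2")
      case True
      have "0 < p - n2 + n1" "p - n2 + n1 < p" using True n by auto
      then show ?thesis using key[of n1 n2] pmin[of "p - n2 + n1"] n True by auto
    next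
      case False
      then have "n2 < n1" using n by auto
      have "0 < p - n1 + n2" "p - n1 + n2 < p" using \<open>n2 < n1\<close> n by auto
      then show ?thesis using key[of n2 n1] pmin[of "p - n1 + n2"] n \<open>n2 < n1\<close> by auto
    qed
  qed
  show ?thesis using that pP inj by blast
qed

lemma funpow_cancel:
  assumes "inj_on h S" "h ` S \<subseteq> S" "x \<in> S"
  shows "i \<le> j \<Longrightarrow> (h^^i) x = (h^^j) x \<Longrightarrow> x = (h^^(j-i)) x"
proof (induction i arbitrary: j)
  case 0 then show ?case by simp
next
  case (Suc i)
  then obtain j' where j: "j = Suc j'" by (cases j) auto
  have "h ((h^^i) x) = h ((h^^j') x)" using Suc.prems j by simp
  then have "(h^^i) x = (h^^j') x"
    using assms funpow_closed inj_onD by metis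
  then show ?case using Suc.IH[of j'] Suc.prems j by simp
qed

lemma orbit_core:
  assumes "finite S" "inj_on h S" "h ` S \<subseteq> S" "L > (0::nat)"
  shows "\<exists>SS c xs. finite SS \<and> (\<forall>T\<in>SS. T \<noteq> {} \<and> T \<subseteq> S \<and> h ` T \<subseteq> T) \<and>
     (\<forall>T1\<in>SS. \<forall>T2\<in>SS. T1 \<noteq> T2 \<longrightarrow> T1 \<inter> T2 = {}) \<and> (\<forall>i<c. xs i \<in> S) \<and>
     inj_on (\<lambda>(i,t). (h^^t) (xs i)) ({..<c} \<times> {..<L}) \<and> card S \<le> (c + card SS) * L"
  using assms(1-3)
proof (induction "card S" arbitrary: S rule: less_induct)
  case less
  show ?case
  proof (cases "S = {}")
    case True
    show ?thesis
      by (rule exI[of _ "{}"], rule exI[of _ 0]) (simp add: True)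
  next
    case False
    then obtain x where xS: "x \<in> S" by auto
    have iter: "(h^^n) x \<in> S" for n using funpow_closed[OF less.prems(3) xS] .
    have "\<not> inj_on (\<lambda>n. (h^^n) x) {..card S}"
    proof
      assume inj: "inj_on (\<lambda>n. (h^^n) x) {..card S}"
      have "(\<lambda>n. (h^^n) x) ` {..card S} \<subseteq> S" using iter by auto
      then have "card ((\<lambda>n. (h^^n) x) ` {..card S}) \<le> card S" using less.prems(1) card_mono by blast
      then show False using card_image[OF inj] by simp
    qed
    then obtain i j where ij: "i < j" "(h^^i) x = (h^^j) x"
      unfolding inj_on_def by (metis linorder_neqE_nat)
    have "x = (h^^(j-i)) x" using funpow_cancel[OF less.prems(2,3) xS] ij by simp
    then obtain p where p: "0 < p" "(h^^p) x = x" "inj_on (\<lambda>n. (h^^n) x) {..<p}"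
      using funpow_period[where f=h and q="j-i" and y=x] ij by auto
    define Orb where "Orb = (\<lambda>n. (h^^n) x) ` {..<p}"
    have cardO: "card Orb = p" using p(3) by (simp add: Orb_def card_image)
    have OS: "Orb \<subseteq> S" using iter by (auto simp: Orb_def)
    have Ocl: "h ` Orb \<subseteq> Orb"
    proof
      fix z assume "z \<in> h ` Orb"
      then obtain n where n: "n < p" "z = h ((h^^n) x)" by (auto simp: Orb_def)
      show "z \<in> Orb"
      proof (cases "Suc n < p")
        case True then show ?thesis using n by (auto simp: Orb_def intro!: image_eqI[of _ _ "Suc n"])
      next
        case False
        then have "Suc n = p" using n by auto
        then have "z = x" using n p(2) by (metis comp_apply funpow.simps(2))
        then show ?thesis using p(1) by (auto simp: Orb_def intro!: image_eqI[of _ _ 0])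
      qed
    qed
    define S' where "S' = S - Orb"
    have S'cl: "h ` S' \<subseteq> S'"
    proof
      fix z assume "z \<in> h ` S'"
      then obtain y where y: "y \<in> S'" "z = h y" by auto
      have zS: "z \<in> S" using y less.prems(3) by (auto simp: S'_def)
      show "z \<in> S'"
      proof (rule ccontr)
        assume "z \<notin> S'"
        then have "z \<in> Orb" using zS by (auto simp: S'_def)
        then obtain n where n: "n < p" "z = (h^^n) x" by (auto simp: Orb_def)
        obtain m where m: "m < p" "h y = h ((h^^m) x)"
        proof (cases n)
          case 0
          then have "h y = h ((h^^(p - 1)) x)" using n y p by (metis Suc_pred' comp_apply funpow.simps(1,2) id_apply)
          then show ?thesis using that[of "p - 1"] p(1) by auto
        next
          case (Suc n')
          then show ?thesis using that[of n'] n y by auto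
        qed
        then have "y = (h^^m) x" using less.prems(2) iter y(1) inj_onD[of h S] by (auto simp: S'_def)
        then have "y \<in> Orb" using m by (auto simp: Orb_def)
        then show False using y by (auto simp: S'_def)
      qed
    qed
    have S'inj: "inj_on h S'" using less.prems(2) by (auto simp: S'_def intro: inj_on_subset)
    have S'fin: "finite S'" using less.prems(1) by (simp add: S'_def)
    have cardS: "card S = card S' + p"
      using card_Diff_subset[OF finite_subset[OF OS less.prems(1)] OS] card_mono[OF less.prems(1) OS] cardO
      by (simp add: S'_def)
    have "card S' < card S" using cardS p(1) by simp
    from less.hyps[OF this S'fin S'inj S'cl] obtain SS1 c1 xs1 where IH:
      "finite SS1" "\<forall>T\<in>SS1. T \<noteq> {} \<and> T \<subseteq> S' \<and> h ` T \<subseteq> T"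
      "\<forall>T1\<in>SS1. \<forall>T2\<in>SS1. T1 \<noteq> T2 \<longrightarrow> T1 \<inter> T2 = {}" "\<forall>i<c1. xs1 i \<in> S'"
      "inj_on (\<lambda>(i,t). (h^^t) (xs1 i)) ({..<c1} \<times> {..<L})" "card S' \<le> (c1 + card SS1) * L"
      by iprover
    define c0 where "c0 = p div L"
    define xs where "xs i = (if i < c1 then xs1 i else (h^^((i - c1) * L)) x)" for i
    have One: "Orb \<noteq> {}" using p(1) by (auto simp: Orb_def)
    have ONin: "Orb \<notin> SS1" using IH(2) One by (auto simp: S'_def)
    have cardSS: "card (insert Orb SS1) = card SS1 + 1" using IH(1) ONin by simp
    have newval: "(h^^t) (xs i) = (h^^(t + (i - c1) * L)) x" "t + (i - c1) * L < p"
      if "c1 \<le> i" "i < c1 + c0" "t < L" for i t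
    proof -
      show "(h^^t) (xs i) = (h^^(t + (i - c1) * L)) x" using that by (simp add: xs_def funpow_add)
      have "Suc (i - c1) \<le> c0" using that by auto
      then have "Suc (i - c1) * L \<le> c0 * L" by (rule mult_le_mono1)
      moreover have "c0 * L \<le> p" by (simp add: c0_def)
      ultimately show "t + (i - c1) * L < p" using that by simp
    qed
    have oldval: "(h^^t) (xs i) \<in> S'" if "i < c1" for i t
      using funpow_closed[OF S'cl] IH(4) that by (simp add: xs_def)
    have inj: "inj_on (\<lambda>(i,t). (h^^t) (xs i)) ({..<c1 + c0} \<times> {..<L})"
    proof (rule inj_onI)
      fix u v assume u: "u \<in> {..<c1 + c0} \<times> {..<L}" and v: "v \<in> {..<c1 + c0} \<times> {..<L}"
        and eq: "(\<lambda>(i,t). (h^^t) (xs i)) u = (\<lambda>(i,t). (h^^t) (xs i)) v"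
      obtain i t where it: "u = (i,t)" by (cases u)
      obtain i' t' where it': "v = (i',t')" by (cases v)
      have e: "(h^^t) (xs i) = (h^^t') (xs i')" using eq it it' by simp
      have tL: "t < L" "t' < L" "i < c1 + c0" "i' < c1 + c0" using u v it it' by auto
      show "u = v"
      proof (cases "i < c1")
        case True
        show ?thesis
        proof (cases "i' < c1")
          case True
          have "(\<lambda>(i,t). (h^^t) (xs1 i)) (i,t) = (\<lambda>(i,t). (h^^t) (xs1 i)) (i',t')"
            using e True \<open>i < c1\<close> by (simp add: xs_def)
          then have "(i,t) = (i',t')"
            by (rule inj_onD[OF IH(5)]) (use tL True \<open>i < c1\<close> in auto)
          then show ?thesis using it it' by simp
        next
          case False
          have "(h^^t') (xs i') \<in> Orb" using newval[of i' t'] False tL by (auto simp: Orb_def)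
          then show ?thesis using oldval[OF True, of t] e by (auto simp: S'_def)
        qed
      next
        case False
        note F = False
        show ?thesis
        proof (cases "i' < c1")
          case True
          have "(h^^t) (xs i) \<in> Orb" using newval[of i t] F tL by (auto simp: Orb_def)
          then show ?thesis using oldval[OF True, of t'] e by (auto simp: S'_def)
        next
          case False
          have "(h^^(t + (i - c1) * L)) x = (h^^(t' + (i' - c1) * L)) x"
            using newval[of i t] newval[of i' t'] F False tL e by simp
          then have "t + (i - c1) * L = t' + (i' - c1) * L"
            by (rule inj_onD[OF p(3)]) (use newval[of i t] newval[of i' t'] F False tL in auto)
          then have "(t + (i - c1) * L) mod L = (t' + (i' - c1) * L) mod L"
            "(t + (i - c1) * L) div L = (t' + (i' - c1) * L) div L" by simp_all
          then have "t = t'" "i - c1 = i' - c1" using tL assms(4) by simp_all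
          then show ?thesis using it it' F False by simp
        qed
      qed
    qed
    have "p < (c0 + 1) * L"
    proof -
      have "p = c0 * L + p mod L" by (simp add: c0_def)
      moreover have "p mod L < L" using assms(4) by simp
      ultimately show ?thesis by simp
    qed
    have cardle: "card S \<le> (c1 + c0 + card (insert Orb SS1)) * L"
    proof -
      have "(c1 + c0 + card (insert Orb SS1)) * L = (c1 + card SS1) * L + (c0+1)*L"
        using cardSS by (simp add: algebra_simps)
      then show ?thesis using cardS IH(6) \<open>p < (c0 + 1) * L\<close> by linarith
    qed
    have xsS: "\<forall>i<c1 + c0. xs i \<in> S" using IH(4) iter by (auto simp: xs_def S'_def)
    have fam: "\<forall>T\<in>insert Orb SS1. T \<noteq> {} \<and> T \<subseteq> S \<and> h ` T \<subseteq> T"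
      using IH(2) One OS Ocl by (auto simp: S'_def)
    have disj: "\<forall>T1\<in>insert Orb SS1. \<forall>T2\<in>insert Orb SS1. T1 \<noteq> T2 \<longrightarrow> T1 \<inter> T2 = {}"
      using IH(2,3) by (auto simp: S'_def)
    show ?thesis
    proof (intro exI[of _ "insert Orb SS1"] exI[of _ "c1 + c0"] exI[of _ xs] conjI)
      show "finite (insert Orb SS1)" using IH(1) by simp
    qed (use fam disj xsS inj cardle in blast)+
  qed
qed



lemma linkage_funs:
  assumes "linkage_in V E Z A B" "finite A" "finite B" "card A = card B"
  shows "\<exists>p. (\<forall>x\<in>A. is_path (V - Z) E (p x) \<and> hd (p x) = x \<and> last (p x) \<in> B) \<and>
    (\<forall>x\<in>A. \<forall>y\<in>A. x \<noteq> y \<longrightarrow> set (p x) \<inter> set (p y) = {}) \<and> bij_betw (\<lambda>x. last (p x)) A B"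
proof -
  obtain Ps where Ps: "finite Ps" "card Ps = card A"
    "\<forall>P\<in>Ps. is_path (V - Z) E P \<and> hd P \<in> A \<and> last P \<in> B"
    "\<forall>P\<in>Ps. \<forall>Q\<in>Ps. P \<noteq> Q \<longrightarrow> set P \<inter> set Q = {}"
    using assms(1) unfolding linkage_in_def by blast
  have ne: "P \<noteq> []" if "P \<in> Ps" for P using Ps(3) that by (auto simp: is_path_def is_walk_def)
  have injh: "inj_on hd Ps"
  proof (rule inj_onI, rule ccontr)
    fix P Q assume "P \<in> Ps" "Q \<in> Ps" "hd P = hd Q" "P \<noteq> Q"
    then show False using Ps(4) ne[of P] ne[of Q] hd_in_set[of P] hd_in_set[of Q] by fastforce
  qed
  have injl: "inj_on last Ps"
  proof (rule inj_onI, rule ccontr)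
    fix P Q assume "P \<in> Ps" "Q \<in> Ps" "last P = last Q" "P \<noteq> Q"
    then show False using Ps(4) ne[of P] ne[of Q] last_in_set[of P] last_in_set[of Q] by fastforce
  qed
  have hA: "hd ` Ps = A"
    by (rule card_subset_eq[OF assms(2)]) (use Ps(3) card_image[OF injh] Ps(2) in auto)
  have lB: "last ` Ps = B"
    by (rule card_subset_eq[OF assms(3)]) (use Ps(3) card_image[OF injl] Ps(2) assms(4) in auto)
  have b1: "bij_betw hd Ps A" using injh hA by (simp add: bij_betw_def)
  have b2: "bij_betw last Ps B" using injl lB by (simp add: bij_betw_def)
  define p where "p = inv_into Ps hd"
  have b3: "bij_betw p A Ps" unfolding p_def using bij_betw_inv_into[OF b1] .
  have pin: "p x \<in> Ps" if "x \<in> A" for x using b3 that by (auto simp: bij_betw_def)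
  have phd: "hd (p x) = x" if "x \<in> A" for x unfolding p_def using hA that by (simp add: f_inv_into_f)
  have bij: "bij_betw (\<lambda>x. last (p x)) A B"
    using bij_betw_trans[OF b3 b2] by (simp add: comp_def)
  have disj: "\<forall>x\<in>A. \<forall>y\<in>A. x \<noteq> y \<longrightarrow> set (p x) \<inter> set (p y) = {}"
    using Ps(4) pin phd by metis
  show ?thesis using Ps(3) pin phd bij disj by (intro exI[of _ p]) auto
qed

lemma linkage_mono:
  assumes "linkage_in V E Z A B" "Z' \<subseteq> Z"
  shows "linkage_in V E Z' A B"
proof -
  have "is_path (V - Z') E P" if "is_path (V - Z) E P" for P
    using that assms(2) by (auto simp: is_path_def is_walk_def)
  then show ?thesis using assms(1) unfolding linkage_in_def by metis
qed

lemma well_linked_subset: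
  assumes "well_linked V E D" "W \<subseteq> D"
  shows "well_linked V E W"
  unfolding well_linked_def
proof (intro conjI allI impI)
  show "W \<subseteq> V" using assms unfolding well_linked_def by auto
  fix A B assume "A \<subseteq> W" "B \<subseteq> W" "card A = card B"
  then have "linkage_in V E (D - (A \<union> B)) A B" using assms unfolding well_linked_def by auto
  then show "linkage_in V E (W - (A \<union> B)) A B" by (rule linkage_mono) (use assms(2) in auto)
qed

lemma distinct_count_le1: "distinct xs \<Longrightarrow> count_list xs v \<le> 1"
  by (induction xs) auto

lemma cycle_verts_ne: "is_cycle E C \<Longrightarrow> cycle_verts C \<noteq> {}"
proof -
  assume "is_cycle E C"
  then obtain cs where "cs \<noteq> []" "C = set (zip cs (rotate1 cs))" unfolding is_cycle_def by blast
  then show ?thesis by (cases cs) (auto simp: cycle_verts_def)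
qed

lemma sum_list_upt0: "sum_list (map g [0..<n]) = (\<Sum>t<n. g t)"
  by (induction n) simp_all



theorem lemma15:
  fixes V :: "'v set" and E :: "('v \<times> 'v) set" and a b k :: nat and D :: "'v set"
  assumes "digraph V E"
    and "a \<ge> 1" and "b \<ge> 1" and "k \<ge> 1"
    and "well_linked V E D" and "card D = 4 * (a + k) * b"
    and "\<not> has_half_integral_cycle_packing V E k"
  shows "\<exists>(P :: nat \<Rightarrow> 'v list) (A :: nat \<Rightarrow> 'v set) (B :: nat \<Rightarrow> 'v set).
           (\<forall>i<a. is_walk V E (P i) \<and> A i \<subseteq> set (P i) \<and> B i \<subseteq> set (P i)) \<and>
           congestion_le a P 2 \<and>
           (\<forall>i<a. card (A i) = b \<and> card (B i) = b) \<and>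
           (\<forall>i<a. \<forall>j<a. A i \<inter> B j = {} \<and>
              (i \<noteq> j \<longrightarrow> A i \<inter> A j = {} \<and> B i \<inter> B j = {})) \<and>
           (\<forall>i<a. \<exists>n. A i \<subseteq> set (take n (P i)) \<and> B i \<subseteq> set (drop n (P i))) \<and>
           well_linked V E (\<Union>i<a. A i \<union> B i)"
proof -
  have finV: "finite V" using assms(1) by (simp add: digraph_def)
  have DV: "D \<subseteq> V" using assms(5) by (simp add: well_linked_def)
  have finD: "finite D" using finite_subset[OF DV finV] .
  define N where "N = 2 * (a + k) * b"
  have cD: "card D = 2 * N" using assms(6) by (simp add: N_def)
  obtain X where X: "X \<subseteq> D" "card X = N" "finite X"
    using obtain_subset_with_card_n[of N D] cD by auto
  define Y where "Y = D - X"
  have finY: "finite Y" using finD by (simp add: Y_def)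
  have cY: "card Y = N" using card_Diff_subset[OF X(3) X(1)] cD X(2) by (simp add: Y_def)
  have XY: "X \<inter> Y = {}" "X \<union> Y = D" using X(1) by (auto simp: Y_def)
  have YD: "Y \<subseteq> D" by (simp add: Y_def)
  have l1: "linkage_in V E (D - (X \<union> Y)) X Y"
    using assms(5) X(1,2) YD cY unfolding well_linked_def by auto
  have l2: "linkage_in V E (D - (Y \<union> X)) Y X"
    using assms(5) X(1,2) YD cY unfolding well_linked_def by auto
  have e1: "D - (X \<union> Y) = {}" "D - (Y \<union> X) = {}" using XY by auto
  obtain p1 where p1: "\<forall>x\<in>X. is_path V E (p1 x) \<and> hd (p1 x) = x \<and> last (p1 x) \<in> Y"
    "\<forall>x\<in>X. \<forall>y\<in>X. x \<noteq> y \<longrightarrow> set (p1 x) \<inter> set (p1 y) = {}" "bij_betw (\<lambda>x. last (p1 x)) X Y"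
    using linkage_funs[OF l1 X(3) finY] X(2) cY e1 by auto
  obtain p2 where p2: "\<forall>x\<in>Y. is_path V E (p2 x) \<and> hd (p2 x) = x \<and> last (p2 x) \<in> X"
    "\<forall>x\<in>Y. \<forall>y\<in>Y. x \<noteq> y \<longrightarrow> set (p2 x) \<inter> set (p2 y) = {}" "bij_betw (\<lambda>x. last (p2 x)) Y X"
    using linkage_funs[OF l2 finY X(3)] X(2) cY e1 by auto
  define pp where "pp z = (if z \<in> X then p1 z else p2 z)" for z
  define h where "h z = last (pp z)" for z
  have pp_path: "is_path V E (pp z)" "hd (pp z) = z" if "z \<in> D" for z
    using that p1(1) p2(1) XY by (auto simp: pp_def)
  have hXY: "z \<in> X \<Longrightarrow> h z \<in> Y" "z \<in> Y \<Longrightarrow> h z \<in> X" for z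
    using p1(1) p2(1) XY by (auto simp: pp_def h_def)
  have XorY: "(z \<in> X \<and> z \<notin> Y) \<or> (z \<in> Y \<and> z \<notin> X)" if "z \<in> D" for z
    using that XY by auto
  have hD: "h z \<in> D" if "z \<in> D" for z using hXY[of z] XorY[OF that] YD X(1) by auto
  have hDD: "h ` D \<subseteq> D" using hD by auto
  have pp_len: "length (pp z) \<ge> 2" if "z \<in> D" for z
  proof (rule ccontr)
    assume A: "\<not> 2 \<le> length (pp z)"
    have "pp z \<noteq> []" using pp_path[OF that] by (auto simp: is_path_def is_walk_def)
    then have "length (pp z) \<noteq> 0" by simp
    then have "length (pp z) = Suc 0" using A by linarith
    then obtain u where "pp z = [u]" by (auto simp: length_Suc_conv)
    then have "h z = z" using pp_path[OF that] by (simp add: h_def)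
    then show False using hXY[of z] XorY[OF that] by auto
  qed
  have pp_walk: "is_walk V E (pp z)" if "z \<in> D" for z using pp_path[OF that] by (simp add: is_path_def)
  have pp_dist: "distinct (pp z)" if "z \<in> D" for z using pp_path[OF that] by (simp add: is_path_def)
  have hinj: "inj_on h D"
  proof (rule inj_onI)
    fix z1 z2 assume z: "z1 \<in> D" "z2 \<in> D" "h z1 = h z2"
    show "z1 = z2"
    proof (cases "z1 \<in> X")
      case True
      have "h z1 \<in> Y" using hXY True by simp
      then have "z2 \<in> X" using z hXY[of z2] XorY[of z2] XorY[of "h z1"] hD[of z1] by auto
      then show ?thesis using True z p1(3) by (auto simp: bij_betw_def inj_on_def h_def pp_def)
    next
      case False
      then have "z1 \<in> Y" using XorY[of z1] z by auto
      then have "h z1 \<in> X" using hXY by simp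
      then have "z2 \<in> Y" using z hXY[of z2] XorY[of z2] XorY[of "h z1"] hD[of z1] by auto
      have "z1 \<notin> X" "z2 \<notin> X" using \<open>z1 \<in> Y\<close> \<open>z2 \<in> Y\<close> XY(1) by auto
      then have "last (p2 z1) = last (p2 z2)" using z(3) by (simp add: h_def pp_def)
      then show ?thesis using \<open>z1 \<in> Y\<close> \<open>z2 \<in> Y\<close> p2(3) by (auto simp: bij_betw_def inj_on_def)
    qed
  qed
  define Zv where "Zv v = {z\<in>D. v \<in> set (pp z)}" for v
  have Zv_card: "card (Zv v) \<le> 2" for v
  proof -
    have s: "Zv v \<subseteq> {z\<in>X. v \<in> set (p1 z)} \<union> {z\<in>Y. v \<in> set (p2 z)}"
      using XY by (auto simp: Zv_def pp_def)
    have c1: "card {z\<in>X. v \<in> set (p1 z)} \<le> 1"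
      using card_le_Suc0_iff_eq[of "{z\<in>X. v \<in> set (p1 z)}"] X(3) p1(2) by auto
    have c2: "card {z\<in>Y. v \<in> set (p2 z)} \<le> 1"
      using card_le_Suc0_iff_eq[of "{z\<in>Y. v \<in> set (p2 z)}"] finY p2(2) by auto
    have "card (Zv v) \<le> card ({z\<in>X. v \<in> set (p1 z)} \<union> {z\<in>Y. v \<in> set (p2 z)})"
      by (rule card_mono) (use X(3) finY s in auto)
    also have "\<dots> \<le> 2" using card_Un_le[of "{z\<in>X. v \<in> set (p1 z)}" "{z\<in>Y. v \<in> set (p2 z)}"] c1 c2 by linarith
    finally show ?thesis .
  qed
  have ZvD: "Zv v \<subseteq> D" for v by (auto simp: Zv_def)
  have bpos: "2 * b > 0" using assms(3) by simp
  obtain SS c xs where core: "finite SS" "\<forall>T\<in>SS. T \<noteq> {} \<and> T \<subseteq> D \<and> h ` T \<subseteq> T"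
     "\<forall>T1\<in>SS. \<forall>T2\<in>SS. T1 \<noteq> T2 \<longrightarrow> T1 \<inter> T2 = {}" "\<forall>i<c. xs i \<in> D"
     "inj_on (\<lambda>(i,t). (h^^t) (xs i)) ({..<c} \<times> {..<2*b})" "card D \<le> (c + card SS) * (2*b)"
    using orbit_core[OF finD hinj hDD bpos] by iprover
  have "(2 * (a + k)) * (2 * b) \<le> (c + card SS) * (2*b)" using core(6) assms(6) by (simp add: algebra_simps)
  then have cr: "2 * (a + k) \<le> c + card SS" using bpos by simp
  have SSsmall: "card SS < 2 * k"
  proof (rule ccontr)
    assume big: "\<not> card SS < 2 * k"
    define U where "U T = (\<Union>z\<in>T. set (pp z))" for T
    have cyc: "\<exists>C. is_cycle E C \<and> cycle_verts C \<subseteq> U T" if T: "T \<in> SS" for T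
    proof (rule succ_cycle)
      have TD: "T \<subseteq> D" "T \<noteq> {}" "h ` T \<subseteq> T" using core(2) T by auto
      have "finite T" using finite_subset[OF TD(1) finD] .
      then show "finite (U T)" by (simp add: U_def)
      obtain z where "z \<in> T" using TD by auto
      then show "U T \<noteq> {}" using pp_path[of z] TD hd_in_set[of "pp z"] pp_len[of z]
        by (auto simp: U_def)
      show "\<forall>u\<in>U T. \<exists>w\<in>U T. (u, w) \<in> E"
      proof
        fix u assume "u \<in> U T"
        then obtain z where z: "z \<in> T" "u \<in> set (pp z)" by (auto simp: U_def)
        have zD: "z \<in> D" using z TD by auto
        show "\<exists>w\<in>U T. (u, w) \<in> E"
        proof (cases "u = last (pp z)")
          case True
          have hz: "h z \<in> T" "h z \<in> D" using z TD zD hD by auto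
          obtain w ws where ww: "pp (h z) = h z # w # ws"
            using pp_len[OF hz(2)] pp_path[OF hz(2)] by (cases "pp (h z)" rule: remdups_adj.cases) auto
          have "(h z, w) \<in> E" using pp_walk[OF hz(2)] ww by (simp add: is_walk_Cons)
          moreover have "w \<in> U T" unfolding U_def using hz ww by (intro UN_I[of "h z"]) auto
          ultimately show ?thesis using True by (auto simp: h_def)
        next
          case False
          obtain n where n: "n < length (pp z)" "u = pp z ! n" using z(2) by (metis in_set_conv_nth)
          have "Suc n < length (pp z)"
          proof (rule ccontr)
            assume "\<not> Suc n < length (pp z)"
            then have "n = length (pp z) - 1" using n by auto
            then show False using False n by (metis last_conv_nth list.size(3) not_less0)
          qed
          then have "(u, pp z ! Suc n) \<in> E" using pp_walk[OF zD] n by (auto simp: is_walk_def)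
          moreover have "pp z ! Suc n \<in> U T" unfolding U_def using z \<open>Suc n < length (pp z)\<close> by (intro UN_I[of z]) auto
          ultimately show ?thesis by blast
        qed
      qed
    qed
    obtain C where C: "\<forall>T\<in>SS. is_cycle E (C T) \<and> cycle_verts (C T) \<subseteq> U T"
      using cyc by metis
    have cntT: "card {T\<in>SS. v \<in> U T} \<le> 2" for v
    proof -
      have "{T\<in>SS. v \<in> U T} = (\<Union>z\<in>Zv v. {T\<in>SS. z \<in> T})"
        using core(2) by (auto simp: U_def Zv_def)
      then have "card {T\<in>SS. v \<in> U T} \<le> (\<Sum>z\<in>Zv v. card {T\<in>SS. z \<in> T})"
        using card_UN_le[of "Zv v" "\<lambda>z. {T\<in>SS. z \<in> T}"] finite_subset[OF ZvD finD] by simp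
      also have "\<dots> \<le> (\<Sum>z\<in>Zv v. 1)"
      proof (rule sum_mono)
        fix z
        show "card {T\<in>SS. z \<in> T} \<le> 1"
          using card_le_Suc0_iff_eq[of "{T\<in>SS. z \<in> T}"] core(1,3) by auto
      qed
      also have "\<dots> = card (Zv v)" by simp
      finally show ?thesis using Zv_card[of v] by linarith
    qed
    define CC where "CC = C ` SS"
    have finCC: "finite CC" using core(1) by (simp add: CC_def)
    have "card SS \<le> 2 * card CC"
    proof -
      have "SS = (\<Union>C0\<in>CC. {T\<in>SS. C T = C0})" by (auto simp: CC_def)
      then have "card SS \<le> (\<Sum>C0\<in>CC. card {T\<in>SS. C T = C0})"
        using card_UN_le[OF finCC, of "\<lambda>C0. {T\<in>SS. C T = C0}"] by simp
      also have "\<dots> \<le> (\<Sum>C0\<in>CC. 2)"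
      proof (rule sum_mono)
        fix C0 assume "C0 \<in> CC"
        then obtain T0 where T0: "T0 \<in> SS" "C0 = C T0" by (auto simp: CC_def)
        then obtain v where v: "v \<in> cycle_verts C0" using C cycle_verts_ne by blast
        have "{T\<in>SS. C T = C0} \<subseteq> {T\<in>SS. v \<in> U T}" using C v by auto
        then have "card {T\<in>SS. C T = C0} \<le> card {T\<in>SS. v \<in> U T}"
          by (rule card_mono[rotated]) (use core(1) in simp)
        then show "card {T\<in>SS. C T = C0} \<le> 2" using cntT[of v] by linarith
      qed
      finally show ?thesis by simp
    qed
    then have "k \<le> card CC" using big by linarith
    then obtain CC' where CC': "CC' \<subseteq> CC" "card CC' = k" "finite CC'"
      using obtain_subset_with_card_n by metis
    have "has_half_integral_cycle_packing V E k"
      unfolding has_half_integral_cycle_packing_def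
    proof (intro exI[of _ CC'] conjI ballI)
      show "finite CC'" "card CC' = k" using CC' by auto
      fix C0 assume "C0 \<in> CC'"
      then show "is_cycle E C0" using CC' C by (auto simp: CC_def)
    next
      fix v assume "v \<in> V"
      have "{C0\<in>CC'. v \<in> cycle_verts C0} \<subseteq> C ` {T\<in>SS. v \<in> U T}"
      proof
        fix C0 assume "C0 \<in> {C0\<in>CC'. v \<in> cycle_verts C0}"
        then obtain T where T: "T \<in> SS" "C0 = C T" "v \<in> cycle_verts C0" using CC' by (auto simp: CC_def)
        then have "v \<in> U T" using C by blast
        then show "C0 \<in> C ` {T\<in>SS. v \<in> U T}" using T by blast
      qed
      then have "card {C0\<in>CC'. v \<in> cycle_verts C0} \<le> card (C ` {T\<in>SS. v \<in> U T})"
        by (rule card_mono[rotated]) (use core(1) in simp)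
      also have "\<dots> \<le> card {T\<in>SS. v \<in> U T}" by (rule card_image_le) (use core(1) in simp)
      finally show "card {C0\<in>CC'. v \<in> cycle_verts C0} \<le> 2" using cntT[of v] by linarith
    qed
    then show False using assms(7) by simp
  qed
  have ac: "a \<le> c" using cr SSsmall by (simp add: algebra_simps)
  define dd where "dd i t = (h^^t) (xs i)" for i t
  have ddD: "dd i t \<in> D" if "i < a" for i t
    unfolding dd_def using funpow_closed[OF hDD] core(4) that ac by auto
  have ddS: "h (dd i t) = dd i (Suc t)" for i t by (simp add: dd_def)
  have DI: "i = j \<and> t = t'" if "i < a" "j < a" "t < 2*b" "t' < 2*b" "dd i t = dd j t'" for i j t t'
  proof -
    have "(\<lambda>(i,t). (h^^t) (xs i)) (i,t) = (\<lambda>(i,t). (h^^t) (xs i)) (j,t')" using that by (simp add: dd_def)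
    then have "(i,t) = (j,t')" by (rule inj_onD[OF core(5)]) (use that ac in auto)
    then show ?thesis by simp
  qed
  define q where "q i t = pp (dd i t)" for i t
  define W where "W i = join (map (q i) [0..<2*b-1])" for i
  define A where "A i = dd i ` {..<b}" for i
  define B where "B i = dd i ` {b..<2*b}" for i
  have split: "[0..<2*b-1] = [0..<b] @ [b..<2*b-1]"
    using upt_add_eq_append[of 0 b "b - 1"] assms(3) by (simp add: mult_2)
  have Wsplit: "W i = concat (map butlast (map (q i) [0..<b])) @ (concat (map butlast (map (q i) [b..<2*b-1])) @ [dd i (2*b-1)])"
    if "i < a" for i
  proof -
    have "last (last (map (q i) [0..<2*b-1])) = last (q i (2*b-2))" using assms(3) by (simp add: last_map numeral_2_eq_2)
    also have "\<dots> = h (dd i (2*b-2))" by (simp add: q_def h_def)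
    also have "\<dots> = dd i (2*b-1)" using assms(3) ddS[of i "2*b-2"] by (simp add: Suc_diff_Suc numeral_2_eq_2)
    finally show ?thesis unfolding W_def join_def split by simp
  qed
  have qlen: "length (q i t) \<ge> 2" if "i < a" for i t using pp_len ddD that by (simp add: q_def)
  have hd_but: "dd i t \<in> set (butlast (q i t))" if ia: "i < a" for i t
  proof -
    have "hd (q i t) = dd i t" using pp_path ddD ia by (simp add: q_def)
    moreover obtain x y r where "q i t = x # y # r" using qlen[OF ia, of t]
      by (cases "q i t" rule: remdups_adj.cases) auto
    ultimately show ?thesis by simp
  qed
  have order: "A i \<subseteq> set (take n (W i)) \<and> B i \<subseteq> set (drop n (W i))"
    if "i < a" and n_def: "n = length (concat (map butlast (map (q i) [0..<b])))" for i n
  proof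
    have tk: "take n (W i) = concat (map butlast (map (q i) [0..<b]))"
      and dr: "drop n (W i) = concat (map butlast (map (q i) [b..<2*b-1])) @ [dd i (2*b-1)]"
      using Wsplit[OF that(1)] n_def by simp_all
    show "A i \<subseteq> set (take n (W i))"
    proof
      fix u assume "u \<in> A i"
      then obtain t where t: "t < b" "u = dd i t" by (auto simp: A_def)
      then show "u \<in> set (take n (W i))" using hd_but[OF that(1), of t] unfolding tk by auto
    qed
    show "B i \<subseteq> set (drop n (W i))"
    proof
      fix u assume "u \<in> B i"
      then obtain t where t: "b \<le> t" "t < 2*b" "u = dd i t" by (auto simp: B_def)
      show "u \<in> set (drop n (W i))"
      proof (cases "t = 2*b-1")
        case True then show ?thesis using t unfolding dr by simp
      next
        case False
        then have "t < 2*b-1" using t by simp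
        then show ?thesis using hd_but[OF that(1), of t] t unfolding dr by auto
      qed
    qed
  qed
  have walk: "is_walk V E (W i)" if "i < a" for i
  proof -
    have "is_walk V E (join (map (q i) [0..<2*b-1])) \<and> hd (join (map (q i) [0..<2*b-1])) = hd (hd (map (q i) [0..<2*b-1]))"
    proof (rule join_walk)
      show "map (q i) [0..<2*b-1] \<noteq> []" using assms(3) by simp
      show "\<forall>p\<in>set (map (q i) [0..<2*b-1]). is_walk V E p \<and> 2 \<le> length p"
        using pp_walk ddD that qlen by (auto simp: q_def)
      show "\<forall>j. Suc j < length (map (q i) [0..<2*b-1]) \<longrightarrow>
          last (map (q i) [0..<2*b-1] ! j) = hd (map (q i) [0..<2*b-1] ! Suc j)"
      proof (intro allI impI)
        fix j assume j: "Suc j < length (map (q i) [0..<2*b-1])"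
        have "last (q i j) = dd i (Suc j)" using ddS[of i j] by (simp add: q_def h_def)
        also have "\<dots> = hd (q i (Suc j))" using pp_path ddD that by (simp add: q_def)
        finally show "last (map (q i) [0..<2*b-1] ! j) = hd (map (q i) [0..<2*b-1] ! Suc j)"
          using j by simp
      qed
    qed
    then show ?thesis by (simp add: W_def)
  qed
  have cong: "congestion_le a W 2"
    unfolding congestion_le_def
  proof
    fix v
    define g where "g z = count_list (pp z) v" for z
    have "(\<Sum>i<a. count_list (W i) v) \<le> (\<Sum>i<a. \<Sum>t<2*b. g (dd i t))"
    proof (rule sum_mono)
      fix i assume "i \<in> {..<a}"
      have "count_list (W i) v \<le> sum_list (map (\<lambda>p. count_list p v) (map (q i) [0..<2*b-1]))"
        unfolding W_def
      proof (rule join_count)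
        show "map (q i) [0..<2*b-1] \<noteq> []" using assms(3) by simp
        have "q i t \<noteq> []" for t using qlen[of i t] \<open>i \<in> {..<a}\<close> by auto
        then show "\<forall>p\<in>set (map (q i) [0..<2*b-1]). p \<noteq> []" by auto
      qed
      also have "\<dots> = (\<Sum>t<2*b-1. g (dd i t))"
        using sum_list_upt0[of "\<lambda>t. count_list (pp (dd i t)) v" "2*b-1"] by (simp add: comp_def g_def q_def)
      also have "\<dots> \<le> (\<Sum>t<2*b. g (dd i t))" by (rule sum_mono2) auto
      finally show "count_list (W i) v \<le> (\<Sum>t<2*b. g (dd i t))" .
    qed
    also have "\<dots> = (\<Sum>(i,t)\<in>{..<a} \<times> {..<2*b}. g (dd i t))"
      by (rule sum.cartesian_product)
    also have "\<dots> = (\<Sum>z\<in>(\<lambda>(i,t). dd i t) ` ({..<a} \<times> {..<2*b}). g z)"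
    proof -
      have "inj_on (\<lambda>(i,t). dd i t) ({..<a} \<times> {..<2*b})"
        by (rule inj_onI) (use DI in auto)
      then show ?thesis by (simp add: sum.reindex case_prod_beta')
    qed
    also have "\<dots> \<le> (\<Sum>z\<in>D. g z)"
      by (rule sum_mono2[OF finD]) (use ddD in auto)
    also have "\<dots> = (\<Sum>z\<in>Zv v. g z)"
      by (rule sum.mono_neutral_right[OF finD ZvD]) (auto simp: Zv_def g_def)
    also have "\<dots> \<le> (\<Sum>z\<in>Zv v. 1)"
    proof (rule sum_mono)
      fix z assume "z \<in> Zv v"
      then have "z \<in> D" using ZvD by auto
      then show "g z \<le> 1" unfolding g_def by (rule distinct_count_le1[OF pp_dist])
    qed
    also have "\<dots> \<le> 2" using Zv_card[of v] by simp
    finally show "(\<Sum>i<a. count_list (W i) v) \<le> 2" .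
  qed
  have cards: "card (A i) = b \<and> card (B i) = b" if "i < a" for i
  proof -
    have "inj_on (dd i) {..<b}" by (rule inj_onI) (use DI that in auto)
    moreover have "inj_on (dd i) {b..<2*b}" by (rule inj_onI) (use DI that in auto)
    ultimately show ?thesis by (simp add: A_def B_def card_image)
  qed
  have disj: "A i \<inter> B j = {} \<and> (i \<noteq> j \<longrightarrow> A i \<inter> A j = {} \<and> B i \<inter> B j = {})"
    if "i < a" "j < a" for i j
  proof (intro conjI impI)
    show "A i \<inter> B j = {}"
    proof (rule ccontr)
      assume "A i \<inter> B j \<noteq> {}"
      then obtain t t' where "t < b" "b \<le> t'" "t' < 2*b" "dd i t = dd j t'" by (auto simp: A_def B_def)
      then show False using DI[OF that, of t t'] by auto
    qed
    assume ij: "i \<noteq> j"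
    show "A i \<inter> A j = {}"
    proof (rule ccontr)
      assume "A i \<inter> A j \<noteq> {}"
      then obtain t t' where "t < b" "t' < b" "dd i t = dd j t'" by (auto simp: A_def)
      then show False using DI[OF that, of t t'] ij by auto
    qed
    show "B i \<inter> B j = {}"
    proof (rule ccontr)
      assume "B i \<inter> B j \<noteq> {}"
      then obtain t t' where "t < 2*b" "t' < 2*b" "dd i t = dd j t'" by (auto simp: B_def)
      then show False using DI[OF that, of t t'] ij by auto
    qed
  qed
  have wl: "well_linked V E (\<Union>i<a. A i \<union> B i)"
    by (rule well_linked_subset[OF assms(5)]) (use ddD in \<open>auto simp: A_def B_def\<close>)
  have c1: "\<forall>i<a. is_walk V E (W i) \<and> A i \<subseteq> set (W i) \<and> B i \<subseteq> set (W i)"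
  proof (intro allI impI conjI)
    fix i assume i: "i < a"
    show "is_walk V E (W i)" using walk[OF i] .
    have o: "A i \<subseteq> set (take (length (concat (map butlast (map (q i) [0..<b])))) (W i))"
      "B i \<subseteq> set (drop (length (concat (map butlast (map (q i) [0..<b])))) (W i))"
      using order[OF i refl] by auto
    show "A i \<subseteq> set (W i)" using o(1) set_take_subset by (metis subset_trans)
    show "B i \<subseteq> set (W i)" using o(2) set_drop_subset by (metis subset_trans)
  qed
  have c3: "\<forall>i<a. card (A i) = b \<and> card (B i) = b" using cards by blast
  have c4: "\<forall>i<a. \<forall>j<a. A i \<inter> B j = {} \<and> (i \<noteq> j \<longrightarrow> A i \<inter> A j = {} \<and> B i \<inter> B j = {})"
    using disj by blast
  have c5: "\<forall>i<a. \<exists>n. A i \<subseteq> set (take n (W i)) \<and> B i \<subseteq> set (drop n (W i))"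
    using order by (meson order)
  show ?thesis
    by (rule exI[of _ W], rule exI[of _ A], rule exI[of _ B]) (use c1 cong c3 c4 c5 wl in blast)
qed


end
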